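(* Let $n\in\mathbb{N}$ and $\alpha=(a_1,\dots,a_n)\in PP_n$. Define $\mathrm{T}(\alpha)=(b_1,\dots,b_n)$ recursively by $b_1=a_1$ and, for $2\le i\le n$, $$b_i=\begin{cases} a_i-1 & \text{if } a_i\neq 1 \text{ and } a_i=b_j \text{ for some } 1\le j<i,\\ a_i & \text{otherwise.}\end{cases}$$ Then $\alpha$ is a $1$-Naples (Naples) parking function, i.e. $\alpha\in PF_{n,1}$, if and only if $\mathrm{T}(\alpha)$ is a classical parking function, i.e. $\mathrm{T}(\alpha)\in PF_{n,0}$.
   Context: For $n\in\mathbb{N}$ let $[n]=\{1,\dots,n\}$ and $PP_n=[n]^n$ (parking preferences). For an integer $k\ge 0$, the $k$-Naples parking rule: there are $n$ spots numbered $1,\dots,n$ west to east, initially empty; cars $c_1,\dots,c_n$ arrive in order, car $c_i$ preferring spot $a_i$. If spot $a_i$ is empty, $c_i$ parks there. Otherwise $c_i$ checks spots $a_i-1,\dots,a_i-k$ in this order (skipping those $<1$) and parks in the first empty one; if all are occupied, it drives east and parks in the first empty spot numbered greater than $a_i$, failing to park if none exists. $PF_{n,k}$ is the set of $\alpha\in PP_n$ for which all cars park. $PF_{n,0}=PF_n$ is the set of classical parking functions (equivalently, $\alpha$ whose weakly increasing rearrangement $(\beta_1,\dots,\beta_n)$ satisfies $\beta_i\le i$ for all $i$). *)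

theory Defs
  imports Main
begin

text \<open>Parking preferences of length n: lists over {1..n}; entry i is the preference of car i+1.\<close>
definition PP :: "nat \<Rightarrow> nat list set" where
  "PP n = {\<alpha>. length \<alpha> = n \<and> set \<alpha> \<subseteq> {1..n}}"

text \<open>Spot taken by a car preferring spot a under the k-Naples rule, given the set occ of
  occupied spots, among spots 1..n (None = fails to park).\<close>
definition naples_spot :: "nat \<Rightarrow> nat \<Rightarrow> nat set \<Rightarrow> nat \<Rightarrow> nat option" where
  "naples_spot n k occ a =
     (if a \<notin> occ then Some a
      else case find (\<lambda>s. s \<notin> occ) (map (\<lambda>j. a - j) (filter (\<lambda>j. j < a) [1..<k+1])) of
             Some s \<Rightarrow> Some s
           | None \<Rightarrow> find (\<lambda>s. s \<notin> occ) [a+1..<n+1])"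

fun naples_run :: "nat \<Rightarrow> nat \<Rightarrow> nat list \<Rightarrow> nat set \<Rightarrow> bool" where
  "naples_run n k [] occ = True"
| "naples_run n k (a # as) occ =
     (case naples_spot n k occ a of
        None \<Rightarrow> False
      | Some s \<Rightarrow> naples_run n k as (insert s occ))"

definition PF :: "nat \<Rightarrow> nat \<Rightarrow> nat list set" where
  "PF n k = {\<alpha> \<in> PP n. naples_run n k \<alpha> {}}"

text \<open>The map T, computed left to right; bs holds b_1..b_{i-1}.\<close>
fun T_aux :: "nat list \<Rightarrow> nat list \<Rightarrow> nat list" where
  "T_aux bs [] = bs"
| "T_aux bs (a # as) = T_aux (bs @ [if a \<noteq> 1 \<and> a \<in> set bs then a - 1 else a]) as"

definition T :: "nat list \<Rightarrow> nat list" where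
  "T \<alpha> = T_aux [] \<alpha>"

end

theory Submission
  imports Defs
begin

fun Tf :: "nat list \<Rightarrow> nat list \<Rightarrow> nat list" where
  "Tf bs [] = []"
| "Tf bs (a # as) = (let b = (if a \<noteq> 1 \<and> a \<in> set bs then a - 1 else a) in b # Tf (bs @ [b]) as)"

lemma T_aux_Tf: "T_aux bs as = bs @ Tf bs as"
  by (induction as arbitrary: bs) (auto simp: Let_def)

lemma Tf_len: "length (Tf bs as) = length as"
  by (induction as arbitrary: bs) (auto simp: Let_def)

lemma Tf_set: "set as \<subseteq> {1..n} \<Longrightarrow> set (Tf bs as) \<subseteq> {1..n}"
  by (induction as arbitrary: bs) (auto simp: Let_def)

definition inv :: "nat set \<Rightarrow> nat list \<Rightarrow> bool" where
  "inv occ bs \<longleftrightarrow> set bs \<subseteq> occ \<and> (\<forall>s\<in>occ. s \<in> set bs \<or> (2 \<le> s \<and> s - 1 \<in> occ))"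

lemma find_upt: "find P [l..<m] = Some s \<Longrightarrow> l \<le> s \<and> s < m \<and> P s \<and> (\<forall>x. l \<le> x \<and> x < s \<longrightarrow> \<not> P x)"
proof -
  assume "find P [l..<m] = Some s"
  then obtain i where i: "i < m - l" "P (l+i)" "s = l + i" "\<forall>j<i. \<not> P (l+j)"
    by (auto simp: find_Some_iff)
  have "\<forall>x. l \<le> x \<and> x < s \<longrightarrow> \<not> P x"
  proof (intro allI impI)
    fix x assume "l \<le> x \<and> x < s"
    then have "x - l < i" "l + (x-l) = x" using i(3) by auto
    then show "\<not> P x" using i(4) by metis
  qed
  then show ?thesis using i by auto
qed

lemma east_prop:
  assumes "a \<in> occ" "1 \<le> a" "find (\<lambda>s. s \<notin> occ) [a+1..<n+1] = Some s"
  shows "2 \<le> s \<and> s - 1 \<in> occ \<and> a < s"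
proof -
  have h: "a+1 \<le> s" "\<forall>x. a+1 \<le> x \<and> x < s \<longrightarrow> x \<in> occ" using find_upt[OF assms(3)] by auto
  have "s - 1 \<in> occ"
  proof (cases "s - 1 = a")
    case True then show ?thesis using assms by simp
  next
    case False then show ?thesis using h by auto
  qed
  moreover have "2 \<le> s" using h(1) assms(2) by simp
  ultimately show ?thesis using h by auto
qed

lemma ns1: "naples_spot n 1 occ a = (if a \<notin> occ then Some a else if 1 < a \<and> a - 1 \<notin> occ then Some (a - 1) else find (\<lambda>s. s \<notin> occ) [a+1..<n+1])"
  by (auto simp: naples_spot_def)

lemma ns1': "naples_spot n (Suc 0) occ a = (if a \<notin> occ then Some a else if 1 < a \<and> a - 1 \<notin> occ then Some (a - 1) else find (\<lambda>s. s \<notin> occ) [a+1..<n+1])"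
  using ns1 by simp

lemma ns0: "naples_spot n 0 occ a = (if a \<notin> occ then Some a else find (\<lambda>s. s \<notin> occ) [a+1..<n+1])"
  by (auto simp: naples_spot_def)

lemma find_shift: "a \<in> occ \<Longrightarrow> find (\<lambda>s. s \<notin> occ) [a..<n+1] = find (\<lambda>s. s \<notin> occ) [a+1..<n+1]"
  by (cases "a < n+1"; cases "a = n") (auto simp: upt_conv_Cons)

lemma step:
  assumes I: "inv occ bs" and a: "1 \<le> a" and b: "b = (if a \<noteq> 1 \<and> a \<in> set bs then a - 1 else a)"
  shows "naples_spot n 1 occ a = naples_spot n 0 occ b \<and> (\<forall>s. naples_spot n 0 occ b = Some s \<longrightarrow> inv (insert s occ) (bs @ [b]))"
proof -
  have I1: "set bs \<subseteq> occ" and I2: "\<And>s. s \<in> occ \<Longrightarrow> s \<in> set bs \<or> (2 \<le> s \<and> s - 1 \<in> occ)"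
    using I unfolding inv_def by auto
  have eq: "naples_spot n 1 occ a = naples_spot n 0 occ b"
  proof (cases "a \<in> occ")
    case False
    then have "a \<notin> set bs" using I1 by auto
    then show ?thesis using False b by (simp add: ns1 ns1' ns0)
  next
    case True
    show ?thesis
    proof (cases "a \<noteq> 1 \<and> a \<in> set bs")
      case c: True
      then have bb: "b = a - 1" "b + 1 = a" using b a by auto
      show ?thesis
      proof (cases "a - 1 \<in> occ")
        case True
        then show ?thesis using \<open>a \<in> occ\<close> c bb find_shift[of a occ n] by (simp add: ns1 ns1' ns0)
      next
        case False
        then show ?thesis using \<open>a \<in> occ\<close> c bb a by (simp add: ns1 ns1' ns0)
      qed
    next
      case c: False
      then have bb: "b = a" using b by auto
      show ?thesis
      proof (cases "a = 1")
        case True then show ?thesis using \<open>a \<in> occ\<close> bb by (simp add: ns1 ns1' ns0)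
      next
        case False
        then have "a \<notin> set bs" using c by auto
        then have "a - 1 \<in> occ" using I2[OF \<open>a \<in> occ\<close>] by auto
        then show ?thesis using \<open>a \<in> occ\<close> bb by (simp add: ns1 ns1' ns0)
      qed
    qed
  qed
  have b1: "1 \<le> b" using a b by auto
  have inv2: "inv (insert s occ) (bs @ [b])" if S: "naples_spot n 0 occ b = Some s" for s
  proof -
    have bo: "b \<in> insert s occ"
    proof (cases "b \<in> occ")
      case False then show ?thesis using S by (simp add: ns0)
    qed simp
    have snew: "s \<in> set (bs @ [b]) \<or> (2 \<le> s \<and> s - 1 \<in> occ)"
    proof (cases "b \<in> occ")
      case False then show ?thesis using S by (simp add: ns0)
    next
      case True then show ?thesis using S east_prop[OF True b1, of n s] by (simp add: ns0)
    qed
    show ?thesis unfolding inv_def using I1 I2 bo snew by auto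
  qed
  show ?thesis using eq inv2 by blast
qed

lemma main:
  assumes "inv occ bs" "set as \<subseteq> {1..n}"
  shows "naples_run n 1 as occ = naples_run n 0 (Tf bs as) occ"
  using assms
proof (induction as arbitrary: bs occ)
  case Nil then show ?case by simp
next
  case (Cons a as)
  define b where "b = (if a \<noteq> 1 \<and> a \<in> set bs then a - 1 else a)"
  have a1: "1 \<le> a" using Cons.prems by auto
  note st = step[OF Cons.prems(1) a1 b_def, of n]
  have tf: "Tf bs (a#as) = b # Tf (bs@[b]) as" by (simp add: b_def Let_def)
  show ?case
  proof (cases "naples_spot n 0 occ b")
    case None then show ?thesis using st tf by (simp del: Tf.simps)
  next
    case (Some s)
    then have "inv (insert s occ) (bs @ [b])" using st by blast
    then show ?thesis using Cons.IH[of "insert s occ" "bs @ [b]"] Cons.prems Some st tf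
      by (simp del: Tf.simps)
  qed
qed

theorem theorem1p2:
  fixes n :: nat and \<alpha> :: "nat list"
  assumes "\<alpha> \<in> PP n"
  shows "\<alpha> \<in> PF n 1 \<longleftrightarrow> T \<alpha> \<in> PF n 0"
proof -
  have TT: "T \<alpha> = Tf [] \<alpha>" unfolding T_def using T_aux_Tf[of "[]" \<alpha>] by simp
  have s: "set \<alpha> \<subseteq> {1..n}" "length \<alpha> = n" using assms unfolding PP_def by auto
  have "T \<alpha> \<in> PP n" unfolding TT PP_def using Tf_len[of "[]" \<alpha>] Tf_set[OF s(1), of "[]"] s(2) by auto
  moreover have "inv {} []" unfolding inv_def by simp
  ultimately show ?thesis using main[OF _ s(1), of "{}" "[]"] assms unfolding PF_def TT by auto
qed

end
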